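(* Let $k$ be a perfect field of characteristic $p>0$, $S=k[x_1,\dots,x_n]$, $I\subseteq S$ a squarefree monomial ideal and $R=S/I$ the Stanley-Reisner ring. Then the $R$-Cartier algebra $\mathcal{C}(R)$ is gauge bounded.
   Context: For $e\ge0$, $F^e_*R$ is $R$ with $R$-structure $r\cdot m=r^{p^e}m$; $\mathcal{C}_e(R)=\mathrm{Hom}_R(F^e_*R,R)$ is the set of $p^{-e}$-linear maps $\psi:R\to R$ (additive with $\psi(r^{p^e}m)=r\psi(m)$), and $\mathcal{C}(R)=\bigoplus_{e\ge0}\mathcal{C}_e(R)$ is the graded ring with multiplication by composition ($\mathcal{C}_0(R)=R$); $\mathcal{C}_+(R)=\bigoplus_{e\ge1}\mathcal{C}_e(R)$, a right $R$-module. Gauge: for $\alpha\in\mathbb{N}_0^n$ let $\|\alpha\|=\max_j\alpha_j$; let $S_d$ be the $k$-span of monomials ${\bf x}^\alpha$ with $\|\alpha\|\le d$. For a finitely generated $S$-module $M$ with generators $m_1,\dots,m_k$, set $M_d=S_d\cdot\langle m_1,\dots,m_k\rangle$ and $\delta(m)=d$ if $m\in M_d\setminus M_{d-1}$, $\delta(0)=-\infty$; the standard gauge on $R$ is the one induced by the generator $1_R$. $\mathcal{C}(R)$ is gauge bounded if for some (equivalently each) gauge $\delta$ on $R$ there is a family $\{\psi_i\in\mathcal{C}_{e_i}(R)\}$ generating $\mathcal{C}_+(R)$ as a right $R$-module and a constant $K$ with $\delta(\psi_i(r))\le \delta(r)/p^{e_i}+K/(p-1)$ for all $i$ and all $r\in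 R$. *)

theory Defs
  imports Complex_Main "HOL-Library.Poly_Mapping" "HOL-Library.Extended_Real"
begin

text \<open>Polynomial ring S = k[x_i | i :: 'n] (with 'n a finite type of variables) as
  finitely supported maps from exponent vectors to coefficients.\<close>

type_synonym ('n, 'k) poly_ring = "('n \<Rightarrow>\<^sub>0 nat) \<Rightarrow>\<^sub>0 'k"

definition monom_x :: "('n \<Rightarrow>\<^sub>0 nat) \<Rightarrow> ('n, 'k::comm_ring_1) poly_ring" where
  "monom_x \<alpha> = Poly_Mapping.single \<alpha> 1"

definition squarefree_exp :: "('n \<Rightarrow>\<^sub>0 nat) \<Rightarrow> bool" where
  "squarefree_exp \<alpha> \<longleftrightarrow> (\<forall>j. Poly_Mapping.lookup \<alpha> j \<le> 1)"

definition monomial_ideal :: "('n \<Rightarrow>\<^sub>0 nat) set \<Rightarrow> ('n, 'k::comm_ring_1) poly_ring set" where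
  "monomial_ideal G = {f. \<exists>gs :: (('n, 'k) poly_ring \<times> ('n \<Rightarrow>\<^sub>0 nat)) list.
      (\<forall>(c, \<beta>) \<in> set gs. \<beta> \<in> G) \<and> f = sum_list (map (\<lambda>(c, \<beta>). c * monom_x \<beta>) gs)}"

definition squarefree_monomial_ideal :: "('n, 'k::comm_ring_1) poly_ring set \<Rightarrow> bool" where
  "squarefree_monomial_ideal I \<longleftrightarrow> (\<exists>G. (\<forall>\<alpha>\<in>G. squarefree_exp \<alpha>) \<and> I = monomial_ideal G)"

text \<open>Elements of R = S/I are represented by polynomials, equality being congruence mod I.
  A p^{-e}-linear map R \<rightarrow> R (an element of C_e(R)) is represented by a map
  \<psi> : S \<rightarrow> S that preserves I (so it is well defined on R), is additive mod I and
  satisfies \<psi>(r^(p^e) m) = r \<psi>(m) mod I.\<close>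
definition cartier_maps ::
  "nat \<Rightarrow> ('n, 'k::comm_ring_1) poly_ring set \<Rightarrow> nat \<Rightarrow>
   (('n, 'k) poly_ring \<Rightarrow> ('n, 'k) poly_ring) set" where
  "cartier_maps p I e = {\<psi>.
      (\<forall>m\<in>I. \<psi> m \<in> I) \<and>
      (\<forall>a b. \<psi> (a + b) - (\<psi> a + \<psi> b) \<in> I) \<and>
      (\<forall>r m. \<psi> (r ^ (p ^ e) * m) - r * \<psi> m \<in> I)}"

text \<open>The family \<Psi> (pairs (e_i, \<psi>_i) with \<psi>_i \<in> C_{e_i}(R), e_i \<ge> 1) generates
  C_+(R) = \<Oplus>_{e\<ge>1} C_e(R) as a right R-module (right action: (\<psi>\<cdot>r)(m) = \<psi>(r m)).
  Since C_+(R) is graded, this means: every \<phi> \<in> C_e(R), e \<ge> 1, is a finite sum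
  \<Sum> \<psi>_i \<cdot> r_i of generators of degree e.\<close>
definition generates_Cplus ::
  "nat \<Rightarrow> ('n, 'k::comm_ring_1) poly_ring set \<Rightarrow>
   (nat \<times> (('n, 'k) poly_ring \<Rightarrow> ('n, 'k) poly_ring)) set \<Rightarrow> bool" where
  "generates_Cplus p I \<Psi> \<longleftrightarrow>
     (\<forall>(e, \<psi>) \<in> \<Psi>. e \<ge> 1 \<and> \<psi> \<in> cartier_maps p I e) \<and>
     (\<forall>e \<ge> 1. \<forall>\<phi> \<in> cartier_maps p I e.
        \<exists>cs :: ((('n, 'k) poly_ring \<Rightarrow> ('n, 'k) poly_ring) \<times> ('n, 'k) poly_ring) list.
          (\<forall>(\<psi>, r) \<in> set cs. (e, \<psi>) \<in> \<Psi>) \<and>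
          (\<forall>m. \<phi> m - sum_list (map (\<lambda>(\<psi>, r). \<psi> (r * m)) cs) \<in> I))"

definition S_d :: "nat \<Rightarrow> ('n, 'k::comm_ring_1) poly_ring set" where
  "S_d d = {f. \<forall>\<alpha> \<in> Poly_Mapping.keys f. \<forall>j. Poly_Mapping.lookup \<alpha> j \<le> d}"

text \<open>ms (lifts of m_1,...,m_k \<in> R) generate R = S/I as an S-module.\<close>
definition generates_R :: "('n, 'k::comm_ring_1) poly_ring set \<Rightarrow> ('n, 'k) poly_ring list \<Rightarrow> bool" where
  "generates_R I ms \<longleftrightarrow>
     (\<forall>f. \<exists>ss. length ss = length ms \<and> f - sum_list (map2 (*) ss ms) \<in> I)"

definition in_M :: "('n, 'k::comm_ring_1) poly_ring set \<Rightarrow> ('n, 'k) poly_ring list \<Rightarrow> nat \<Rightarrow>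
    ('n, 'k) poly_ring \<Rightarrow> bool" where
  "in_M I ms d f \<longleftrightarrow>
     (\<exists>ss. length ss = length ms \<and> set ss \<subseteq> S_d d \<and> f - sum_list (map2 (*) ss ms) \<in> I)"

definition gauge :: "('n, 'k::comm_ring_1) poly_ring set \<Rightarrow> ('n, 'k) poly_ring list \<Rightarrow>
    ('n, 'k) poly_ring \<Rightarrow> ereal" where
  "gauge I ms f = (if f \<in> I then -\<infinity> else ereal (real (LEAST d. in_M I ms d f)))"

definition gauge_bounded :: "nat \<Rightarrow> ('n, 'k::comm_ring_1) poly_ring set \<Rightarrow> bool" where
  "gauge_bounded p I \<longleftrightarrow>
     (\<exists>ms. generates_R I ms \<and>
        (\<exists>\<Psi> (K::real). generates_Cplus p I \<Psi> \<and>
           (\<forall>(e, \<psi>) \<in> \<Psi>. \<forall>r.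
              gauge I ms (\<psi> r) \<le> gauge I ms r / ereal (real (p ^ e)) + ereal (K / (real p - 1)))))"

end

theory Submission imports Defs "HOL-Computational_Algebra.Primes" "HOL-Library.FuncSet" begin

abbreviation lookup where "lookup \<equiv> Poly_Mapping.lookup"
abbreviation keys where "keys \<equiv> Poly_Mapping.keys"
abbreviation single where "single \<equiv> Poly_Mapping.single"

definition mk :: "('n::finite \<Rightarrow> nat) \<Rightarrow> ('n \<Rightarrow>\<^sub>0 nat)" where "mk f = Abs_poly_mapping f"
lemma fin_fun: "finite {x::'n::finite. f x \<noteq> 0}" by (rule finite_subset[OF subset_UNIV]) simp
lemma lookup_mk [simp]: "lookup (mk f) = f"
  unfolding mk_def using fin_fun[of f] by (simp add: Abs_poly_mapping_inverse)

lemma pm_eq_iff: "(a::'n \<Rightarrow>\<^sub>0 'b::zero) = b \<longleftrightarrow> (\<forall>j. lookup a j = lookup b j)"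
  by (auto intro: poly_mapping_eqI)

lemma CHAR_pm: "CHAR(('n \<Rightarrow>\<^sub>0 nat) \<Rightarrow>\<^sub>0 'k::comm_semiring_1) = CHAR('k)"
proof -
  have "{n. of_nat n = (0::('n \<Rightarrow>\<^sub>0 nat) \<Rightarrow>\<^sub>0 'k)} = {n. of_nat n = (0::'k)}"
  proof (intro Collect_cong)
    fix n
    have sn: "(of_nat n::('n \<Rightarrow>\<^sub>0 nat) \<Rightarrow>\<^sub>0 'k) = single 0 (of_nat n)" by (rule single_of_nat[symmetric])
    show "(of_nat n = (0::('n \<Rightarrow>\<^sub>0 nat) \<Rightarrow>\<^sub>0 'k)) = (of_nat n = (0::'k))"
    proof
      assume "of_nat n = (0::('n \<Rightarrow>\<^sub>0 nat) \<Rightarrow>\<^sub>0 'k)"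
      then have "lookup (of_nat n::('n \<Rightarrow>\<^sub>0 nat) \<Rightarrow>\<^sub>0 'k) 0 = 0" by simp
      then show "of_nat n = (0::'k)" by (simp add: lookup_of_nat)
    next
      assume "of_nat n = (0::'k)"
      then show "of_nat n = (0::('n \<Rightarrow>\<^sub>0 nat) \<Rightarrow>\<^sub>0 'k)"
        using sn by simp
    qed
  qed
  then show ?thesis unfolding semiring_char_def by simp
qed

lemma poly_rep: "f = (\<Sum>\<beta>\<in>keys f. single \<beta> (lookup f \<beta>))"
proof (rule poly_mapping_eqI)
  fix k
  have "lookup (\<Sum>\<beta>\<in>keys f. single \<beta> (lookup f \<beta>)) k
      = (\<Sum>\<beta>\<in>keys f. if \<beta> = k then lookup f \<beta> else 0)"
    unfolding lookup_sum by (intro sum.cong) (auto simp: lookup_single when_def)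
  also have "\<dots> = lookup f k"
    by (simp add: sum.delta in_keys_iff)
  finally show "lookup f k = lookup (\<Sum>\<beta>\<in>keys f. single \<beta> (lookup f \<beta>)) k" by simp
qed

section \<open>q-th roots\<close>

lemma frob_inj:
  fixes a b :: "'k::field"
  assumes pr: "prime CHAR('k)" and eq: "a ^ (CHAR('k) ^ e) = b ^ (CHAR('k) ^ e)"
  shows "a = b"
proof -
  have "a ^ (CHAR('k) ^ e) = ((a - b) + b) ^ (CHAR('k) ^ e)" by simp
  also have "\<dots> = (a - b) ^ (CHAR('k) ^ e) + b ^ (CHAR('k) ^ e)"
    by (rule freshmans_dream'[OF pr refl])
  finally have "(a - b) ^ (CHAR('k) ^ e) = 0" using eq by simp
  then show ?thesis by simp
qed

lemma frob_surj:
  fixes c :: "'k::field"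
  assumes sj: "surj (\<lambda>x::'k. x ^ CHAR('k))"
  shows "\<exists>y. y ^ (CHAR('k) ^ e) = c"
proof (induction e arbitrary: c)
  case 0 then show ?case by auto
next
  case (Suc e)
  obtain y where y: "y ^ CHAR('k) = c" using sj by (metis surjD)
  obtain z where z: "z ^ (CHAR('k) ^ e) = y" using Suc by blast
  have "z ^ (CHAR('k) ^ Suc e) = (z ^ (CHAR('k) ^ e)) ^ CHAR('k)"
    by (simp add: power_mult[symmetric] mult.commute)
  then show ?case using y z by auto
qed

definition rt :: "nat \<Rightarrow> 'k::field \<Rightarrow> 'k" where
  "rt e c = (if c = 0 then 0 else (SOME y. y ^ (CHAR('k) ^ e) = c))"

lemma rt_zero [simp]: "rt e 0 = 0" by (simp add: rt_def)

lemma rt_pow: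
  fixes c :: "'k::field"
  assumes pr: "prime CHAR('k)" and sj: "surj (\<lambda>x::'k. x ^ CHAR('k))"
  shows "rt e c ^ (CHAR('k) ^ e) = c"
proof (cases "c = 0")
  case True
  have "CHAR('k) > 0" using pr prime_gt_0_nat by blast
  then show ?thesis using True by (simp add: rt_def)
next
  case False
  then show ?thesis unfolding rt_def using frob_surj[OF sj, of e c] by (simp add: someI_ex[where P="\<lambda>y. y ^ (CHAR('k) ^ e) = c"])
qed

lemma rt_eq:
  fixes c y :: "'k::field"
  assumes pr: "prime CHAR('k)" and sj: "surj (\<lambda>x::'k. x ^ CHAR('k))"
    and "y ^ (CHAR('k) ^ e) = c"
  shows "rt e c = y"
  using frob_inj[OF pr, of "rt e c" e y] rt_pow[OF pr sj, of e c] assms(3) by simp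

lemma rt_add:
  fixes a b :: "'k::field"
  assumes pr: "prime CHAR('k)" and sj: "surj (\<lambda>x::'k. x ^ CHAR('k))"
  shows "rt e (a + b) = rt e a + rt e b"
  by (rule rt_eq[OF pr sj]) (simp add: freshmans_dream'[OF pr refl] rt_pow[OF pr sj])

lemma rt_mult:
  fixes a b :: "'k::field"
  assumes pr: "prime CHAR('k)" and sj: "surj (\<lambda>x::'k. x ^ CHAR('k))"
  shows "rt e (a * b) = rt e a * rt e b"
  by (rule rt_eq[OF pr sj]) (simp add: power_mult_distrib rt_pow[OF pr sj])

lemma rt_powq:
  fixes a :: "'k::field"
  assumes pr: "prime CHAR('k)" and sj: "surj (\<lambda>x::'k. x ^ CHAR('k))"
  shows "rt e (a ^ (CHAR('k) ^ e)) = a"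
  by (rule rt_eq[OF pr sj]) simp


section \<open>The trace map\<close>

definition tpow :: "nat \<Rightarrow> ('n::finite \<Rightarrow>\<^sub>0 nat) \<Rightarrow> ('n \<Rightarrow>\<^sub>0 nat)" where
  "tpow q \<mu> = mk (\<lambda>j. q * lookup \<mu> j + (q - 1))"

definition smul :: "nat \<Rightarrow> ('n::finite \<Rightarrow>\<^sub>0 nat) \<Rightarrow> ('n \<Rightarrow>\<^sub>0 nat)" where
  "smul q \<mu> = mk (\<lambda>j. q * lookup \<mu> j)"

definition Tq :: "nat \<Rightarrow> ('n::finite, 'k::field) poly_ring \<Rightarrow> ('n, 'k) poly_ring" where
  "Tq e f = Abs_poly_mapping (\<lambda>\<mu>. rt e (lookup f (tpow (CHAR('k) ^ e) \<mu>)))"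

lemma tpow_inj: "q > 0 \<Longrightarrow> inj (tpow q)"
proof (rule injI)
  fix a b :: "'n::finite \<Rightarrow>\<^sub>0 nat"
  assume q: "q > 0" and "tpow q a = tpow q b"
  then have "\<forall>j. q * lookup a j + (q - 1) = q * lookup b j + (q - 1)"
    by (metis tpow_def lookup_mk)
  then have "\<forall>j. q * lookup a j = q * lookup b j" by (metis add_right_cancel)
  then show "a = b" using q by (simp add: pm_eq_iff)
qed

lemma lookup_Tq:
  assumes pr: "prime CHAR('k::field)"
  shows "lookup (Tq e (f :: ('n::finite, 'k) poly_ring)) \<mu> = rt e (lookup f (tpow (CHAR('k) ^ e) \<mu>))"
proof -
  have q: "CHAR('k) ^ e > 0" using pr prime_gt_0_nat by simp
  have "{\<mu>. rt e (lookup f (tpow (CHAR('k) ^ e) \<mu>)) \<noteq> 0} \<subseteq> tpow (CHAR('k) ^ e) -` keys f"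
    by (auto simp: in_keys_iff)
  moreover have "finite (tpow (CHAR('k) ^ e) -` keys f)"
    by (rule finite_vimageI) (use tpow_inj[OF q] in auto)
  ultimately have "finite {\<mu>. rt e (lookup f (tpow (CHAR('k) ^ e) \<mu>)) \<noteq> 0}"
    by (rule finite_subset)
  then show ?thesis unfolding Tq_def by simp
qed

context
  fixes dummy :: "'k::field itself"
  assumes pr: "prime CHAR('k)" and sj: "surj (\<lambda>x::'k. x ^ CHAR('k))"
begin

lemma Tq_add: "Tq e (f + g) = Tq e f + Tq e (g :: ('n::finite, 'k) poly_ring)"
  by (rule poly_mapping_eqI) (simp add: lookup_Tq[OF pr] lookup_add rt_add[OF pr sj])

lemma Tq_zero [simp]: "Tq e (0 :: ('n::finite, 'k) poly_ring) = 0"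
  by (rule poly_mapping_eqI) (simp add: lookup_Tq[OF pr])

lemma Tq_sum: "Tq e (sum (f :: _ \<Rightarrow> ('n::finite, 'k) poly_ring) A) = (\<Sum>a\<in>A. Tq e (f a))"
  by (induction A rule: infinite_finite_induct) (simp_all add: Tq_add)

lemma Tq_diff: "Tq e (f - g) = Tq e f - Tq e (g :: ('n::finite, 'k) poly_ring)"
proof -
  have "Tq e (f - g) + Tq e g = Tq e f" by (simp flip: Tq_add)
  then show ?thesis by (simp add: eq_diff_eq)
qed

lemma Tq_single_tpow:
  "Tq e (single (tpow (CHAR('k) ^ e) \<mu>) c) = single \<mu> (rt e (c::'k) :: 'k)"
proof -
  have q: "CHAR('k) ^ e > 0" using pr prime_gt_0_nat by simp
  show ?thesis
  proof (rule poly_mapping_eqI)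
    fix \<nu>
    show "lookup (Tq e (single (tpow (CHAR('k) ^ e) \<mu>) c)) \<nu> = lookup (single \<mu> (rt e c)) \<nu>"
      using injD[OF tpow_inj[OF q], of \<mu> \<nu>]
      by (auto simp: lookup_Tq[OF pr] lookup_single when_def)
  qed
qed

lemma Tq_single_not:
  assumes "\<forall>\<mu>. \<nu> \<noteq> tpow (CHAR('k) ^ e) \<mu>"
  shows "Tq e (single \<nu> (c::'k)) = (0 :: ('n::finite, 'k) poly_ring)"
  by (rule poly_mapping_eqI) (use assms in \<open>auto simp: lookup_Tq[OF pr] lookup_single when_def\<close>)

lemma single_pow: "(single \<alpha> (c::'k)) ^ n = single (smul n \<alpha>) (c ^ n :: 'k)"
  for \<alpha> :: "'n::finite \<Rightarrow>\<^sub>0 nat"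
proof (induction n)
  case 0
  have "smul 0 \<alpha> = 0" by (simp add: pm_eq_iff smul_def)
  then show ?case by simp
next
  case (Suc n)
  have "\<alpha> + smul n \<alpha> = smul (Suc n) \<alpha>" by (simp add: pm_eq_iff smul_def lookup_add)
  then show ?case using Suc by (simp add: mult_single)
qed

lemma Tq_term:
  fixes \<alpha> \<nu> :: "'n::finite \<Rightarrow>\<^sub>0 nat" and c d :: 'k
  shows "Tq e (single (smul (CHAR('k) ^ e) \<alpha> + \<nu>) (c ^ (CHAR('k) ^ e) * d))
         = single \<alpha> c * Tq e (single \<nu> d)"
proof (cases "\<exists>\<mu>. \<nu> = tpow (CHAR('k) ^ e) \<mu>")
  case True
  then obtain \<mu> where \<mu>: "\<nu> = tpow (CHAR('k) ^ e) \<mu>" by blast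
  have "smul (CHAR('k) ^ e) \<alpha> + \<nu> = tpow (CHAR('k) ^ e) (\<alpha> + \<mu>)"
    by (simp add: \<mu> pm_eq_iff smul_def tpow_def lookup_add algebra_simps)
  then show ?thesis
    by (simp add: \<mu> Tq_single_tpow mult_single rt_mult[OF pr sj] rt_powq[OF pr sj])
next
  case False
  let ?q = "CHAR('k) ^ e"
  have q: "?q > 0" using pr prime_gt_0_nat by simp
  have "\<forall>\<mu>'. smul ?q \<alpha> + \<nu> \<noteq> tpow ?q \<mu>'"
  proof (intro allI notI)
    fix \<mu>' assume eq: "smul ?q \<alpha> + \<nu> = tpow ?q \<mu>'"
    have j: "?q * lookup \<alpha> j + lookup \<nu> j = ?q * lookup \<mu>' j + (?q - 1)" for j
      using arg_cong[OF eq, of "\<lambda>x. lookup x j"] by (simp add: smul_def tpow_def lookup_add)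
    have le: "lookup \<alpha> j \<le> lookup \<mu>' j" for j
    proof (rule ccontr)
      assume "\<not> ?thesis"
      then have "Suc (lookup \<mu>' j) \<le> lookup \<alpha> j" by simp
      then have "?q * Suc (lookup \<mu>' j) \<le> ?q * lookup \<alpha> j" by (rule mult_le_mono2)
      then have "?q + ?q * lookup \<mu>' j \<le> ?q * lookup \<alpha> j" by simp
      then show False using j[of j] q by linarith
    qed
    have "\<nu> = tpow ?q (mk (\<lambda>j. lookup \<mu>' j - lookup \<alpha> j))"
    proof (subst pm_eq_iff, intro allI)
      fix j
      have "?q * lookup \<mu>' j = ?q * lookup \<alpha> j + ?q * (lookup \<mu>' j - lookup \<alpha> j)"
        using le[of j] by (simp add: diff_mult_distrib2)
      then show "lookup \<nu> j = lookup (tpow ?q (mk (\<lambda>j. lookup \<mu>' j - lookup \<alpha> j))) j"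
        using j[of j] by (simp add: tpow_def)
    qed
    then show False using False by blast
  qed
  then show ?thesis using False by (simp add: Tq_single_not)
qed

lemma Tq_mono_lin:
  fixes \<alpha> :: "'n::finite \<Rightarrow>\<^sub>0 nat" and c :: 'k and f :: "('n, 'k) poly_ring"
  shows "Tq e (single (smul (CHAR('k) ^ e) \<alpha>) (c ^ (CHAR('k) ^ e)) * f) = single \<alpha> c * Tq e f"
proof -
  have "single (smul (CHAR('k) ^ e) \<alpha>) (c ^ (CHAR('k) ^ e)) * f
      = (\<Sum>\<nu>\<in>keys f. single (smul (CHAR('k) ^ e) \<alpha> + \<nu>) (c ^ (CHAR('k) ^ e) * lookup f \<nu>))"
    by (subst poly_rep[of f]) (simp add: sum_distrib_left mult_single)
  then have "Tq e (single (smul (CHAR('k) ^ e) \<alpha>) (c ^ (CHAR('k) ^ e)) * f)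
      = (\<Sum>\<nu>\<in>keys f. single \<alpha> c * Tq e (single \<nu> (lookup f \<nu>)))"
    by (simp add: Tq_sum Tq_term)
  also have "\<dots> = single \<alpha> c * Tq e f"
    by (subst (2) poly_rep[of f]) (simp add: Tq_sum sum_distrib_left)
  finally show ?thesis .
qed

lemma Tq_lin:
  fixes r f :: "('n::finite, 'k) poly_ring"
  shows "Tq e (r ^ (CHAR('k) ^ e) * f) = r * Tq e f"
proof -
  have prP: "prime CHAR(('n \<Rightarrow>\<^sub>0 nat) \<Rightarrow>\<^sub>0 'k)" using pr by (simp add: CHAR_pm)
  have "r ^ (CHAR('k) ^ e) = (\<Sum>\<alpha>\<in>keys r. single \<alpha> (lookup r \<alpha>)) ^ (CHAR('k) ^ e)"
    by (subst poly_rep[of r]) simp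
  also have "\<dots> = (\<Sum>\<alpha>\<in>keys r. (single \<alpha> (lookup r \<alpha>)) ^ (CHAR('k) ^ e))"
    by (rule freshmans_dream_sum'[OF prP]) (simp add: CHAR_pm)
  also have "\<dots> = (\<Sum>\<alpha>\<in>keys r. single (smul (CHAR('k) ^ e) \<alpha>) (lookup r \<alpha> ^ (CHAR('k) ^ e)))"
    by (simp add: single_pow)
  finally have "Tq e (r ^ (CHAR('k) ^ e) * f) = (\<Sum>\<alpha>\<in>keys r. single \<alpha> (lookup r \<alpha>) * Tq e f)"
    by (simp add: sum_distrib_right Tq_sum Tq_mono_lin)
  also have "\<dots> = r * Tq e f"
    by (subst (2) poly_rep[of r]) (simp add: sum_distrib_right)
  finally show ?thesis .
qed

end


section \<open>Monomial ideals\<close>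

definition inI :: "('n \<Rightarrow>\<^sub>0 nat) set \<Rightarrow> ('n \<Rightarrow>\<^sub>0 nat) \<Rightarrow> bool" where
  "inI G \<beta> \<longleftrightarrow> (\<exists>g\<in>G. \<forall>j. lookup g j \<le> lookup \<beta> j)"

lemma inI_add: "inI G \<beta> \<Longrightarrow> inI G (\<alpha> + \<beta>)"
  unfolding inI_def lookup_add by (metis trans_le_add2)

lemma keys_mult_single1:
  "keys (c * single b (1::'k::comm_ring_1)) \<subseteq> {x + b | x. x \<in> keys c}"
  using keys_mult[of c "single b 1"] by auto

lemma I_char:
  "(f::('n::finite,'k::comm_ring_1) poly_ring) \<in> monomial_ideal G \<longleftrightarrow> (\<forall>\<beta>\<in>keys f. inI G \<beta>)"
proof
  assume "f \<in> monomial_ideal G"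
  then obtain gs :: "(('n, 'k) poly_ring \<times> ('n \<Rightarrow>\<^sub>0 nat)) list" where
    gs: "\<forall>(c, \<beta>) \<in> set gs. \<beta> \<in> G" and f: "f = sum_list (map (\<lambda>(c, \<beta>). c * monom_x \<beta>) gs)"
    unfolding monomial_ideal_def by blast
  have "\<forall>\<beta>\<in>keys (sum_list (map (\<lambda>(c, \<beta>). c * monom_x \<beta>) gs)). inI G \<beta>"
    using gs
  proof (induction gs)
    case Nil then show ?case by simp
  next
    case (Cons a gs)
    obtain c b where a: "a = (c, b)" by force
    have bG: "b \<in> G" using Cons.prems a by auto
    have "\<forall>\<beta>\<in>keys (c * monom_x b). inI G \<beta>"
    proof
      fix \<beta> assume "\<beta> \<in> keys (c * monom_x b)"
      then obtain x where "\<beta> = x + b" using keys_mult_single1[of c b] unfolding monom_x_def by auto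
      moreover have "inI G b" using bG unfolding inI_def by auto
      ultimately show "inI G \<beta>" by (simp add: inI_add)
    qed
    then show ?case using Cons keys_add[of "c * monom_x b"] a by auto
  qed
  then show "\<forall>\<beta>\<in>keys f. inI G \<beta>" using f by simp
next
  assume H: "\<forall>\<beta>\<in>keys f. inI G \<beta>"
  have "\<forall>\<beta>\<in>keys f. \<exists>g. g \<in> G \<and> (\<forall>j. lookup g j \<le> lookup \<beta> j)"
    using H unfolding inI_def by blast
  from bchoice[OF this] obtain gg where gg0: "\<forall>\<beta>\<in>keys f. gg \<beta> \<in> G \<and> (\<forall>j. lookup (gg \<beta>) j \<le> lookup \<beta> j)"
    by blast
  have gg: "gg \<beta> \<in> G \<and> (\<forall>j. lookup (gg \<beta>) j \<le> lookup \<beta> j)" if "\<beta> \<in> keys f" for \<beta>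
    using gg0 that by blast
  obtain xs where xs: "distinct xs" "set xs = keys f" 
  proof -
    have "finite (keys f)" by simp
    from finite_distinct_list[OF this] show ?thesis using that by blast
  qed
  define gs where "gs = map (\<lambda>\<beta>. (single (mk (\<lambda>j. lookup \<beta> j - lookup (gg \<beta>) j)) (lookup f \<beta>), gg \<beta>)) xs"
  have "sum_list (map (\<lambda>(c, \<beta>). c * monom_x \<beta>) gs)
      = sum_list (map (\<lambda>\<beta>. single (mk (\<lambda>j. lookup \<beta> j - lookup (gg \<beta>) j)) (lookup f \<beta>) * monom_x (gg \<beta>)) xs)"
    by (simp add: gs_def comp_def)
  also have "\<dots> = (\<Sum>\<beta>\<in>keys f. single (mk (\<lambda>j. lookup \<beta> j - lookup (gg \<beta>) j)) (lookup f \<beta>) * monom_x (gg \<beta>))"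
    using xs by (simp add: sum_list_distinct_conv_sum_set)
  also have "\<dots> = (\<Sum>\<beta>\<in>keys f. single \<beta> (lookup f \<beta>))"
  proof (rule sum.cong[OF refl])
    fix \<beta> assume b: "\<beta> \<in> keys f"
    have "mk (\<lambda>j. lookup \<beta> j - lookup (gg \<beta>) j) + gg \<beta> = \<beta>"
      using gg[OF b] by (simp add: pm_eq_iff lookup_add)
    then show "single (mk (\<lambda>j. lookup \<beta> j - lookup (gg \<beta>) j)) (lookup f \<beta>) * monom_x (gg \<beta>) = single \<beta> (lookup f \<beta>)"
      by (simp add: monom_x_def mult_single)
  qed
  also have "\<dots> = f" by (rule poly_rep[symmetric])
  finally have "f = sum_list (map (\<lambda>(c, \<beta>). c * monom_x \<beta>) gs)" by simp
  moreover have "\<forall>(c, \<beta>) \<in> set gs. \<beta> \<in> G" using gg xs unfolding gs_def by auto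
  ultimately show "f \<in> monomial_ideal G" unfolding monomial_ideal_def by blast
qed

context
  fixes G :: "('n::finite \<Rightarrow>\<^sub>0 nat) set"
begin

abbreviation "II \<equiv> (monomial_ideal G :: ('n, 'k::comm_ring_1) poly_ring set)"

lemma I_zero: "0 \<in> II" by (simp add: I_char)

lemma I_add: "f \<in> II \<Longrightarrow> g \<in> II \<Longrightarrow> f + g \<in> II"
  using keys_add[of f g] by (auto simp: I_char)

lemma I_uminus: "f \<in> II \<Longrightarrow> - f \<in> II"
  by (auto simp: I_char)

lemma I_diff: "f \<in> II \<Longrightarrow> g \<in> II \<Longrightarrow> f - g \<in> II"
  using keys_diff[of f g] by (auto simp: I_char)

lemma I_mult: "f \<in> II \<Longrightarrow> g * f \<in> II"
proof -
  assume f: "f \<in> II"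
  show "g * f \<in> II" unfolding I_char
  proof
    fix \<beta> assume "\<beta> \<in> keys (g * f)"
    then obtain a b where "\<beta> = a + b" "b \<in> keys f" using keys_mult[of g f] by auto
    then show "inI G \<beta>" using f by (auto simp: I_char inI_add)
  qed
qed

lemma I_sum: "(\<And>a. a \<in> A \<Longrightarrow> h a \<in> II) \<Longrightarrow> sum h A \<in> II"
  by (induction A rule: infinite_finite_induct) (auto simp: I_zero I_add)

lemma I_single: "single \<beta> c \<in> II \<longleftrightarrow> c = 0 \<or> inI G \<beta>"
  by (auto simp: I_char)

lemma I_keys: "f \<in> II \<Longrightarrow> \<beta> \<in> keys f \<Longrightarrow> inI G \<beta>"
  by (auto simp: I_char)

end

lemma inI_supp:
  assumes sq: "\<forall>\<alpha>\<in>G. squarefree_exp \<alpha>" and "inI G \<beta>"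
    and "\<forall>j. 1 \<le> lookup \<beta> j \<longrightarrow> 1 \<le> lookup \<beta>' j"
  shows "inI G \<beta>'"
proof -
  obtain g where g: "g \<in> G" "\<forall>j. lookup g j \<le> lookup \<beta> j" using assms(2) unfolding inI_def by blast
  have "lookup g j \<le> lookup \<beta>' j" for j
  proof -
    have "lookup g j \<le> 1" using sq g(1) unfolding squarefree_exp_def by blast
    then show ?thesis using g(2)[rule_format, of j] assms(3) by (cases "lookup g j") auto
  qed
  then show ?thesis using g(1) unfolding inI_def by blast
qed


lemma lookup_single_mult:
  "lookup (single b c * (F::('n::finite, 'k::comm_ring_1) poly_ring)) (b + x) = c * lookup F x"
proof -
  have "single b c * F = (\<Sum>\<nu>\<in>keys F. single (b + \<nu>) (c * lookup F \<nu>))"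
    by (subst poly_rep[of F]) (simp add: sum_distrib_left mult_single)
  then have "lookup (single b c * F) (b + x) = (\<Sum>\<nu>\<in>keys F. if \<nu> = x then c * lookup F \<nu> else 0)"
    by (simp add: lookup_sum lookup_single when_def)
  also have "\<dots> = c * lookup F x" by (simp add: sum.delta in_keys_iff)
  finally show ?thesis .
qed

context
  fixes G :: "('n::finite \<Rightarrow>\<^sub>0 nat) set" and dummy :: "'k::field itself"
  assumes pr: "prime CHAR('k)" and sj: "surj (\<lambda>x::'k. x ^ CHAR('k))"
    and sq: "\<forall>\<alpha>\<in>G. squarefree_exp \<alpha>"
begin

abbreviation "JJ \<equiv> (monomial_ideal G :: ('n, 'k) poly_ring set)"

lemma phi_zero: "\<phi> \<in> cartier_maps p JJ e \<Longrightarrow> \<phi> 0 \<in> JJ"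
  for \<phi> :: "('n, 'k) poly_ring \<Rightarrow> ('n, 'k) poly_ring"
proof -
  assume "\<phi> \<in> cartier_maps p JJ e"
  then have "\<phi> (0 + 0) - (\<phi> 0 + \<phi> 0) \<in> JJ" unfolding cartier_maps_def by blast
  then have "- \<phi> 0 \<in> JJ" by simp
  from I_uminus[OF this] show ?thesis by simp
qed

lemma phi_sum:
  fixes \<phi> :: "('n, 'k) poly_ring \<Rightarrow> ('n, 'k) poly_ring"
  assumes add: "\<forall>a b. \<phi> (a + b) - (\<phi> a + \<phi> b) \<in> JJ" and z: "\<phi> 0 \<in> JJ"
  shows "\<phi> (sum h A) - (\<Sum>a\<in>A. \<phi> (h a)) \<in> JJ"
proof (induction A rule: infinite_finite_induct)
  case (infinite A) then show ?case using z by simp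
next
  case empty then show ?case using z by simp
next
  case (insert x F)
  have "\<phi> (sum h (insert x F)) - (\<Sum>a\<in>insert x F. \<phi> (h a))
      = (\<phi> (h x + sum h F) - (\<phi> (h x) + \<phi> (sum h F))) + (\<phi> (sum h F) - (\<Sum>a\<in>F. \<phi> (h a)))"
    using insert by (simp add: algebra_simps)
  moreover have "(\<phi> (h x + sum h F) - (\<phi> (h x) + \<phi> (sum h F))) + (\<phi> (sum h F) - (\<Sum>a\<in>F. \<phi> (h a))) \<in> JJ"
    by (rule I_add) (use add insert.IH in auto)
  ultimately show ?case by simp
qed

lemma phi_mono:
  assumes "\<phi> \<in> cartier_maps CHAR('k) JJ e"
  shows "\<phi> (single (smul (CHAR('k) ^ e) \<beta> + \<gamma>) c) - single \<beta> (rt e c) * \<phi> (single \<gamma> 1) \<in> JJ"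
proof -
  have "(single \<beta> (rt e c)) ^ (CHAR('k) ^ e) * single \<gamma> 1 = single (smul (CHAR('k) ^ e) \<beta> + \<gamma>) c"
    by (simp add: single_pow[OF pr sj] mult_single rt_pow[OF pr sj])
  moreover have "\<phi> ((single \<beta> (rt e c)) ^ (CHAR('k) ^ e) * single \<gamma> 1) - single \<beta> (rt e c) * \<phi> (single \<gamma> 1) \<in> JJ"
    using assms unfolding cartier_maps_def by blast
  ultimately show ?thesis by simp
qed

lemma gen_preserves:
  fixes \<phi> :: "('n, 'k) poly_ring \<Rightarrow> ('n, 'k) poly_ring"
  assumes phi: "\<phi> \<in> cartier_maps CHAR('k) JJ e"
    and gam: "\<forall>j. lookup \<gamma> j < CHAR('k) ^ e" and eps: "\<epsilon> \<in> keys (\<phi> (single \<gamma> 1))"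
    and m: "m \<in> JJ"
  shows "Tq e (single (mk (\<lambda>j. min (CHAR('k) ^ e * lookup \<epsilon> j + (CHAR('k) ^ e - 1) - lookup \<gamma> j) (CHAR('k) ^ e))) 1 * m) \<in> JJ"
proof -
  define q where "q = CHAR('k) ^ e"
  have q: "q > 0" unfolding q_def using pr prime_gt_0_nat by simp
  define D where "D j = q * lookup \<epsilon> j + (q - 1) - lookup \<gamma> j" for j
  define D' where "D' = mk (\<lambda>j. min (D j) q)"
  have gq: "lookup \<gamma> j < q" for j using gam q_def by simp
  have "\<forall>\<mu>\<in>keys (Tq e (single D' 1 * m)). inI G \<mu>"
  proof
    fix \<mu> assume "\<mu> \<in> keys (Tq e (single D' 1 * m))"
    then have "lookup (single D' 1 * m) (tpow q \<mu>) \<noteq> 0"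
      unfolding q_def by (auto simp: in_keys_iff lookup_Tq[OF pr])
    then have "tpow q \<mu> \<in> keys (single D' 1 * m)" by (simp add: in_keys_iff)
    then obtain \<alpha> where t\<alpha>: "tpow q \<mu> = D' + \<alpha>" and \<alpha>: "\<alpha> \<in> keys m"
      using keys_mult[of "single D' (1::'k)" m] by auto
    have in\<alpha>: "inI G \<alpha>" using I_keys[OF m \<alpha>] .
    have eqj: "q * lookup \<mu> j + (q - 1) = min (D j) q + lookup \<alpha> j" for j
      using arg_cong[OF t\<alpha>, of "\<lambda>x. lookup x j"] by (simp add: tpow_def D'_def lookup_add)
    define \<beta>' where "\<beta>' = mk (\<lambda>j. if q \<le> D j then 1 else lookup \<mu> j - lookup \<epsilon> j)"
    define \<alpha>' where "\<alpha>' = mk (\<lambda>j. if q \<le> D j then q + lookup \<gamma> j else lookup \<alpha> j)"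
    have facts: "lookup \<alpha>' j = q * lookup \<beta>' j + lookup \<gamma> j \<and>
        (\<not> q \<le> D j \<longrightarrow> lookup \<beta>' j + lookup \<epsilon> j = lookup \<mu> j) \<and> (q \<le> D j \<longrightarrow> 1 \<le> lookup \<mu> j)" for j
    proof (cases "q \<le> D j")
      case True
      then have "q * lookup \<mu> j + (q - 1) = q + lookup \<alpha> j" using eqj[of j] by simp
      then have "1 \<le> lookup \<mu> j" using q by (cases "lookup \<mu> j") auto
      then show ?thesis using True by (simp add: \<alpha>'_def \<beta>'_def)
    next
      case False
      have g: "lookup \<gamma> j \<le> q - 1" using gq[of j] by simp
      have "q * lookup \<mu> j + (q - 1) = q * lookup \<epsilon> j + (q - 1) - lookup \<gamma> j + lookup \<alpha> j"
        using eqj[of j] False by (simp add: D_def)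
      then have e1: "q * lookup \<mu> j + lookup \<gamma> j = q * lookup \<epsilon> j + lookup \<alpha> j" using g by linarith
      have le: "lookup \<epsilon> j \<le> lookup \<mu> j"
      proof (rule ccontr)
        assume "\<not> ?thesis"
        then have "Suc (lookup \<mu> j) \<le> lookup \<epsilon> j" by simp
        then have "q * Suc (lookup \<mu> j) \<le> q * lookup \<epsilon> j" by (rule mult_le_mono2)
        then have "q + q * lookup \<mu> j \<le> q * lookup \<epsilon> j" by simp
        then show False using e1 gq[of j] by linarith
      qed
      have "q * lookup \<mu> j = q * lookup \<epsilon> j + q * (lookup \<mu> j - lookup \<epsilon> j)"
        using le by (simp add: diff_mult_distrib2)
      then show ?thesis using False e1 le by (simp add: \<alpha>'_def \<beta>'_def)
    qed
    have \<alpha>'eq: "\<alpha>' = smul q \<beta>' + \<gamma>"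
      using facts by (simp add: pm_eq_iff smul_def lookup_add)
    have "inI G \<alpha>'"
    proof (rule inI_supp[OF sq in\<alpha>], intro allI impI)
      fix j assume "1 \<le> lookup \<alpha> j"
      then show "1 \<le> lookup \<alpha>' j" using q by (simp add: \<alpha>'_def)
    qed
    then have "single \<alpha>' (1::'k) \<in> JJ" by (simp add: I_single)
    then have A: "\<phi> (single \<alpha>' 1) \<in> JJ" using phi unfolding cartier_maps_def by blast
    have B: "\<phi> (single \<alpha>' 1) - single \<beta>' 1 * \<phi> (single \<gamma> 1) \<in> JJ"
      using phi_mono[OF phi, of \<beta>' \<gamma> 1] rt_powq[OF pr sj, of e 1]
      by (simp add: \<alpha>'eq q_def)
    have "\<phi> (single \<alpha>' 1) - (\<phi> (single \<alpha>' 1) - single \<beta>' 1 * \<phi> (single \<gamma> 1)) \<in> JJ"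
      by (rule I_diff[OF A B])
    then have C: "single \<beta>' 1 * \<phi> (single \<gamma> 1) \<in> JJ" by simp
    have "lookup (single \<beta>' 1 * \<phi> (single \<gamma> 1)) (\<beta>' + \<epsilon>) \<noteq> 0"
      using eps by (simp add: lookup_single_mult in_keys_iff)
    then have "inI G (\<beta>' + \<epsilon>)" using I_keys[OF C] by (simp add: in_keys_iff)
    then show "inI G \<mu>"
    proof (rule inI_supp[OF sq], intro allI impI)
      fix j assume "1 \<le> lookup (\<beta>' + \<epsilon>) j"
      then show "1 \<le> lookup \<mu> j" using facts[of j] by (cases "q \<le> D j") (auto simp: lookup_add)
    qed
  qed
  then have "Tq e (single D' 1 * m) \<in> JJ" by (simp add: I_char)
  then show ?thesis by (simp add: D'_def D_def q_def)
qed

lemma gen_cartier: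
  assumes "\<forall>m\<in>JJ. Tq e (single D' 1 * m) \<in> JJ"
  shows "(\<lambda>m. Tq e (single D' (1::'k) * m)) \<in> cartier_maps CHAR('k) JJ e"
proof -
  have "Tq e (single D' 1 * (a + b)) - (Tq e (single D' 1 * a) + Tq e (single D' 1 * b)) \<in> JJ"
    for a b :: "('n, 'k) poly_ring"
    by (simp add: distrib_left Tq_add[OF pr sj] I_zero)
  moreover have "Tq e (single D' 1 * (r ^ (CHAR('k) ^ e) * m)) - r * Tq e (single D' 1 * m) \<in> JJ"
    for r m :: "('n, 'k) poly_ring"
  proof -
    have eq: "single D' 1 * (r ^ (CHAR('k) ^ e) * m) = r ^ (CHAR('k) ^ e) * (single D' 1 * m)"
      by (simp add: algebra_simps)
    have "Tq e (single D' 1 * (r ^ (CHAR('k) ^ e) * m)) = r * Tq e (single D' 1 * m)"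
      unfolding eq by (rule Tq_lin[OF pr sj])
    then show ?thesis by (simp add: I_zero)
  qed
  ultimately show ?thesis using assms unfolding cartier_maps_def by blast
qed

lemma gen_small:
  assumes D': "\<forall>j. lookup D' j \<le> CHAR('k) ^ e" and s: "s \<in> S_d d"
  shows "Tq e (single D' (1::'k) * s) \<in> S_d ((d + 1) div CHAR('k) ^ e)"
  unfolding S_d_def
proof (intro CollectI ballI allI)
  define q where "q = CHAR('k) ^ e"
  have q: "q > 0" unfolding q_def using pr prime_gt_0_nat by simp
  fix \<mu> j assume "\<mu> \<in> keys (Tq e (single D' 1 * s))"
  then have "lookup (single D' 1 * s) (tpow q \<mu>) \<noteq> 0"
    unfolding q_def by (auto simp: in_keys_iff lookup_Tq[OF pr])
  then have "tpow q \<mu> \<in> keys (single D' 1 * s)" by (simp add: in_keys_iff)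
  then obtain \<alpha> where t\<alpha>: "tpow q \<mu> = D' + \<alpha>" and \<alpha>: "\<alpha> \<in> keys s"
    using keys_mult[of "single D' (1::'k)" s] by auto
  have "q * lookup \<mu> j + (q - 1) = lookup D' j + lookup \<alpha> j"
    using arg_cong[OF t\<alpha>, of "\<lambda>x. lookup x j"] by (simp add: tpow_def lookup_add)
  moreover have "lookup \<alpha> j \<le> d" using s \<alpha> unfolding S_d_def by blast
  moreover have "lookup D' j \<le> q" using D' q_def by simp
  ultimately have "lookup \<mu> j * q \<le> d + 1" using q by (simp add: mult.commute)
  then show "lookup \<mu> j \<le> (d + 1) div CHAR('k) ^ e"
    using q unfolding q_def by (simp add: less_eq_div_iff_mult_less_eq)
qed

lemma finite_Gam: "finite {\<gamma>::'n \<Rightarrow>\<^sub>0 nat. \<forall>j. lookup \<gamma> j < q}"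
proof -
  have "finite (Pi UNIV (\<lambda>_::'n. {..<q}))"
    using finite_PiE[of "UNIV::'n set" "\<lambda>_. {..<q}"] by (simp add: PiE_UNIV_domain)
  then have "finite (lookup -` Pi UNIV (\<lambda>_::'n. {..<q}))"
    by (rule finite_vimageI) (auto intro: injI poly_mapping_eqI)
  moreover have "{\<gamma>::'n \<Rightarrow>\<^sub>0 nat. \<forall>j. lookup \<gamma> j < q} = lookup -` Pi UNIV (\<lambda>_::'n. {..<q})"
    by auto
  ultimately show ?thesis by simp
qed

lemma decomp:
  fixes \<phi> :: "('n, 'k) poly_ring \<Rightarrow> ('n, 'k) poly_ring"
  assumes phi: "\<phi> \<in> cartier_maps CHAR('k) JJ e"
  shows "\<phi> m - (\<Sum>x \<in> Sigma {\<gamma>. \<forall>j. lookup \<gamma> j < CHAR('k) ^ e} (\<lambda>\<gamma>. keys (\<phi> (single \<gamma> 1))).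
      Tq e (single (mk (\<lambda>j. CHAR('k) ^ e * lookup (snd x) j + (CHAR('k) ^ e - 1) - lookup (fst x) j))
              ((lookup (\<phi> (single (fst x) 1)) (snd x)) ^ (CHAR('k) ^ e)) * m)) \<in> JJ"
proof -
  define q where "q = CHAR('k) ^ e"
  have q: "q > 0" unfolding q_def using pr prime_gt_0_nat by simp
  define \<Gamma> where "\<Gamma> = {\<gamma>::'n \<Rightarrow>\<^sub>0 nat. \<forall>j. lookup \<gamma> j < q}"
  define P where "P = Sigma \<Gamma> (\<lambda>\<gamma>. keys (\<phi> (single \<gamma> 1)))"
  define Dd where "Dd \<gamma> \<epsilon> = mk (\<lambda>j. q * lookup \<epsilon> j + (q - 1) - lookup \<gamma> j)" for \<gamma> \<epsilon> :: "'n \<Rightarrow>\<^sub>0 nat"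
  define a where "a \<gamma> \<epsilon> = lookup (\<phi> (single \<gamma> 1)) \<epsilon>" for \<gamma> \<epsilon>
  define tm where "tm x m = Tq e (single (Dd (fst x) (snd x)) (a (fst x) (snd x) ^ q) * m)" for x m
  define R where "R m = (\<Sum>x\<in>P. tm x m)" for m
  have fin\<Gamma>: "finite \<Gamma>" unfolding \<Gamma>_def by (rule finite_Gam)
  have Rsum: "R (sum h A) = (\<Sum>y\<in>A. R (h y))" for h :: "'a \<Rightarrow> ('n, 'k) poly_ring" and A
    unfolding R_def tm_def by (simp add: sum_distrib_left Tq_sum[OF pr sj] sum.swap[of _ P])
  have mono: "\<phi> (single \<alpha> c) - R (single \<alpha> c) \<in> JJ" for \<alpha> c
  proof -
    define \<gamma>0 where "\<gamma>0 = mk (\<lambda>j. lookup \<alpha> j mod q)"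
    define \<beta> where "\<beta> = mk (\<lambda>j. lookup \<alpha> j div q)"
    have \<alpha>eq: "\<alpha> = smul q \<beta> + \<gamma>0"
      by (simp add: pm_eq_iff smul_def \<beta>_def \<gamma>0_def lookup_add)
    have \<gamma>0\<Gamma>: "\<gamma>0 \<in> \<Gamma>" using q by (simp add: \<Gamma>_def \<gamma>0_def)
    define F0 where "F0 = \<phi> (single \<gamma>0 1)"
    have tm_eq: "tm (\<gamma>, \<epsilon>) (single \<alpha> c) = Tq e (single (Dd \<gamma> \<epsilon> + \<alpha>) (a \<gamma> \<epsilon> ^ q * c))" for \<gamma> \<epsilon>
      by (simp add: tm_def mult_single)
    have tm0: "tm (\<gamma>, \<epsilon>) (single \<alpha> c) = 0" if "\<gamma> \<in> \<Gamma>" "\<gamma> \<noteq> \<gamma>0" for \<gamma> \<epsilon>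
    proof -
      have "\<forall>\<mu>. Dd \<gamma> \<epsilon> + \<alpha> \<noteq> tpow (CHAR('k) ^ e) \<mu>"
      proof (intro allI notI)
        fix \<mu> assume eq: "Dd \<gamma> \<epsilon> + \<alpha> = tpow (CHAR('k) ^ e) \<mu>"
        have "lookup \<gamma> j = lookup \<gamma>0 j" for j
        proof -
          have g: "lookup \<gamma> j < q" using that(1) by (simp add: \<Gamma>_def)
          have "q * lookup \<epsilon> j + (q - 1) - lookup \<gamma> j + lookup \<alpha> j = q * lookup \<mu> j + (q - 1)"
            using arg_cong[OF eq, of "\<lambda>x. lookup x j"] by (simp add: Dd_def tpow_def lookup_add q_def)
          then have "q * lookup \<epsilon> j + lookup \<alpha> j = q * lookup \<mu> j + lookup \<gamma> j" using g by linarith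
          then have "(q * lookup \<epsilon> j + lookup \<alpha> j) mod q = (q * lookup \<mu> j + lookup \<gamma> j) mod q" by simp
          then have "lookup \<alpha> j mod q = lookup \<gamma> j" using g by simp
          then show ?thesis by (simp add: \<gamma>0_def)
        qed
        then have "\<gamma> = \<gamma>0" by (simp add: pm_eq_iff)
        then show False using that(2) by simp
      qed
      then show ?thesis by (simp add: tm_eq Tq_single_not[OF pr sj])
    qed
    have tm1: "tm (\<gamma>0, \<epsilon>) (single \<alpha> c) = single (\<epsilon> + \<beta>) (a \<gamma>0 \<epsilon> * rt e c)" for \<epsilon>
    proof -
      have "Dd \<gamma>0 \<epsilon> + \<alpha> = tpow q (\<epsilon> + \<beta>)"
      proof (subst pm_eq_iff, intro allI)
        fix j
        have g: "lookup \<alpha> j mod q \<le> q - 1" using q by (simp add: less_Suc_eq_le[symmetric])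
        have X: "lookup \<alpha> j = q * (lookup \<alpha> j div q) + lookup \<alpha> j mod q" by simp
        show "lookup (Dd \<gamma>0 \<epsilon> + \<alpha>) j = lookup (tpow q (\<epsilon> + \<beta>)) j"
          by (simp add: Dd_def tpow_def lookup_add \<gamma>0_def \<beta>_def distrib_left) (use X g in linarith)
      qed
      then show ?thesis
        by (simp add: tm_eq q_def Tq_single_tpow[OF pr sj] rt_mult[OF pr sj] rt_powq[OF pr sj])
    qed
    have "R (single \<alpha> c) = (\<Sum>\<gamma>\<in>\<Gamma>. \<Sum>\<epsilon>\<in>keys (\<phi> (single \<gamma> 1)). tm (\<gamma>, \<epsilon>) (single \<alpha> c))"
      unfolding R_def P_def
      using sum.Sigma[OF fin\<Gamma>, of "\<lambda>\<gamma>. keys (\<phi> (single \<gamma> 1))" "\<lambda>\<gamma> \<epsilon>. tm (\<gamma>, \<epsilon>) (single \<alpha> c)"]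
      by (simp add: split_def)
    also have "\<dots> = (\<Sum>\<gamma>\<in>\<Gamma>. if \<gamma> = \<gamma>0 then (\<Sum>\<epsilon>\<in>keys F0. single (\<epsilon> + \<beta>) (a \<gamma>0 \<epsilon> * rt e c)) else 0)"
      by (rule sum.cong[OF refl]) (auto simp: tm0 tm1 F0_def)
    also have "\<dots> = (\<Sum>\<epsilon>\<in>keys F0. single (\<epsilon> + \<beta>) (a \<gamma>0 \<epsilon> * rt e c))"
      using fin\<Gamma> \<gamma>0\<Gamma> by (simp add: sum.delta')
    also have "\<dots> = single \<beta> (rt e c) * F0"
      by (subst (2) poly_rep[of F0]) (simp add: sum_distrib_left mult_single a_def F0_def add.commute mult.commute)
    finally have "R (single \<alpha> c) = single \<beta> (rt e c) * F0" .
    then show ?thesis using phi_mono[OF phi, of \<beta> \<gamma>0 c] by (simp add: \<alpha>eq F0_def q_def)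
  qed
  define h where "h \<beta> = single \<beta> (lookup m \<beta>)" for \<beta>
  have msum: "m = sum h (keys m)" unfolding h_def by (rule poly_rep)
  have "\<phi> m - R m = (\<phi> (sum h (keys m)) - (\<Sum>\<beta>\<in>keys m. \<phi> (h \<beta>))) + (\<Sum>\<beta>\<in>keys m. \<phi> (h \<beta>) - R (h \<beta>))"
  proof -
    have Rm: "R m = (\<Sum>\<beta>\<in>keys m. R (h \<beta>))" by (rule trans[OF arg_cong[OF msum, of R] Rsum])
    have phm: "\<phi> (sum h (keys m)) = \<phi> m" using arg_cong[OF msum, of \<phi>] by simp
    show ?thesis using Rm phm by (simp add: sum_subtractf)
  qed
  moreover have "\<phi> (sum h (keys m)) - (\<Sum>\<beta>\<in>keys m. \<phi> (h \<beta>)) \<in> JJ"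
    by (rule phi_sum) (use phi phi_zero[OF phi] in \<open>auto simp: cartier_maps_def\<close>)
  moreover have "(\<Sum>\<beta>\<in>keys m. \<phi> (h \<beta>) - R (h \<beta>)) \<in> JJ"
    by (rule I_sum) (simp add: h_def mono)
  ultimately have "\<phi> m - R m \<in> JJ" by (simp add: I_add)
  then show ?thesis by (simp add: R_def P_def \<Gamma>_def tm_def Dd_def a_def q_def)
qed

end


lemma in_M1: "in_M I [1] d f \<longleftrightarrow> (\<exists>s. s \<in> S_d d \<and> f - s \<in> I)"
proof
  assume "in_M I [1] d f"
  then obtain ss where "length ss = 1" "set ss \<subseteq> S_d d" "f - sum_list (map2 (*) ss [1]) \<in> I"
    unfolding in_M_def by auto
  then show "\<exists>s. s \<in> S_d d \<and> f - s \<in> I" by (cases ss) auto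
next
  assume "\<exists>s. s \<in> S_d d \<and> f - s \<in> I"
  then obtain s where "s \<in> S_d d" "f - s \<in> I" by blast
  then show "in_M I [1] d f" unfolding in_M_def by (intro exI[of _ "[s]"]) auto
qed

lemma in_S_d: "\<exists>d. (f::('n::finite, 'k::comm_ring_1) poly_ring) \<in> S_d d"
proof -
  define d where "d = (\<Sum>\<alpha>\<in>keys f. \<Sum>j\<in>UNIV. lookup \<alpha> j)"
  have "lookup \<alpha> j \<le> d" if "\<alpha> \<in> keys f" for \<alpha> j
  proof -
    have "lookup \<alpha> j \<le> (\<Sum>j\<in>UNIV. lookup \<alpha> j)" by (rule member_le_sum) auto
    also have "\<dots> \<le> d" unfolding d_def by (rule member_le_sum) (use that in auto)
    finally show ?thesis .
  qed
  then show ?thesis unfolding S_d_def by blast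
qed

lemma div_real_le: "q > 0 \<Longrightarrow> real (n div q) \<le> real n / real q"
proof -
  assume q: "q > 0"
  have "n div q * q \<le> n" by simp
  then have "real (n div q) * real q \<le> real n" by (metis of_nat_le_iff of_nat_mult)
  then show ?thesis using q by (simp add: pos_le_divide_eq)
qed

theorem proposition5p3:
  fixes I :: "('n::finite, 'k::field) poly_ring set"
  assumes "CHAR('k) > 0"
    and "surj (\<lambda>x::'k. x ^ CHAR('k))"
    and "squarefree_monomial_ideal I"
  shows "gauge_bounded CHAR('k) I"
proof -
  have pr: "prime CHAR('k)" using assms(1) by (rule prime_CHAR_semidom)
  note sj = assms(2)
  obtain G where sq: "\<forall>\<alpha>\<in>G. squarefree_exp \<alpha>" and IG: "I = monomial_ideal G"
    using assms(3) unfolding squarefree_monomial_ideal_def by blast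
  define p where "p = CHAR('k)"
  have p2: "p \<ge> 2" unfolding p_def using pr prime_ge_2_nat by blast
  define \<Psi> where "\<Psi> = {(e, \<psi>). e \<ge> 1 \<and> (\<exists>D'. (\<forall>j. lookup D' j \<le> CHAR('k) ^ e) \<and>
      \<psi> = (\<lambda>m. Tq e (single D' (1::'k) * m))) \<and> \<psi> \<in> cartier_maps CHAR('k) I e}"
  have genR: "generates_R I [1]"
    unfolding generates_R_def
  proof
    fix f :: "('n, 'k) poly_ring"
    show "\<exists>ss. length ss = length [1] \<and> f - sum_list (map2 (*) ss [1]) \<in> I"
      by (rule exI[of _ "[f]"]) (simp add: IG I_zero)
  qed
  have genC: "generates_Cplus CHAR('k) I \<Psi>"
    unfolding generates_Cplus_def
  proof (intro conjI)
    show "\<forall>(e, \<psi>) \<in> \<Psi>. 1 \<le> e \<and> \<psi> \<in> cartier_maps CHAR('k) I e" unfolding \<Psi>_def by auto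
  next
    show "\<forall>e\<ge>1. \<forall>\<phi>\<in>cartier_maps CHAR('k) I e. \<exists>cs. (\<forall>(\<psi>, r) \<in> set cs. (e, \<psi>) \<in> \<Psi>) \<and>
        (\<forall>m. \<phi> m - sum_list (map (\<lambda>(\<psi>, r). \<psi> (r * m)) cs) \<in> I)"
  proof (intro allI impI ballI)
    fix e :: nat and \<phi> assume e: "1 \<le> e" and phi: "\<phi> \<in> cartier_maps CHAR('k) I e"
    define q where "q = CHAR('k) ^ e"
    define P where "P = Sigma {\<gamma>::'n \<Rightarrow>\<^sub>0 nat. \<forall>j. lookup \<gamma> j < q} (\<lambda>\<gamma>. keys (\<phi> (single \<gamma> 1)))"
    define Dd where "Dd x = mk (\<lambda>j. q * lookup (snd x) j + (q - 1) - lookup (fst x) j)"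
      for x :: "('n \<Rightarrow>\<^sub>0 nat) \<times> ('n \<Rightarrow>\<^sub>0 nat)"
    define D' where "D' x = mk (\<lambda>j. min (lookup (Dd x) j) q)" for x
    define a where "a x = lookup (\<phi> (single (fst x) 1)) (snd x)" for x
    define ps where "ps x = (\<lambda>m. Tq e (single (D' x) (1::'k) * m))" for x
    define rr where "rr x = single (mk (\<lambda>j. lookup (Dd x) j - lookup (D' x) j)) (a x ^ q)" for x
    have finP: "finite P" unfolding P_def
      by (rule finite_SigmaI[OF finite_Gam[OF pr sj sq]]) simp
    obtain xs where xs: "distinct xs" "set xs = P"
      using finite_distinct_list[OF finP] by blast
    define cs where "cs = map (\<lambda>x. (ps x, rr x)) xs"
    have "\<forall>(\<psi>, r) \<in> set cs. (e, \<psi>) \<in> \<Psi>"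
    proof (clarsimp simp: cs_def)
      fix \<gamma> \<epsilon> assume "(\<gamma>, \<epsilon>) \<in> set xs"
      then have x: "(\<gamma>, \<epsilon>) \<in> P" using xs by simp
      have "\<forall>m\<in>I. ps (\<gamma>, \<epsilon>) m \<in> I"
        using gen_preserves[OF pr sj sq, of \<phi> e \<gamma> \<epsilon>] phi x IG
        by (auto simp: P_def ps_def D'_def Dd_def q_def)
      then have "ps (\<gamma>, \<epsilon>) \<in> cartier_maps CHAR('k) I e"
        unfolding ps_def IG by (rule gen_cartier[OF pr sj sq])
      moreover have "\<forall>j. lookup (D' (\<gamma>, \<epsilon>)) j \<le> CHAR('k) ^ e" by (simp add: D'_def q_def)
      ultimately show "(e, ps (\<gamma>, \<epsilon>)) \<in> \<Psi>" unfolding \<Psi>_def using e by (auto simp: ps_def)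
    qed
    moreover have "\<forall>m. \<phi> m - sum_list (map (\<lambda>(\<psi>, r). \<psi> (r * m)) cs) \<in> I"
    proof
      fix m
      have "sum_list (map (\<lambda>(\<psi>, r). \<psi> (r * m)) cs) = sum_list (map (\<lambda>x. ps x (rr x * m)) xs)"
        by (simp add: cs_def comp_def)
      also have "\<dots> = (\<Sum>x\<in>P. ps x (rr x * m))"
        using xs by (simp add: sum_list_distinct_conv_sum_set)
      also have "\<dots> = (\<Sum>x\<in>P. Tq e (single (Dd x) (a x ^ q) * m))"
      proof (rule sum.cong[OF refl])
        fix x
        have "D' x + mk (\<lambda>j. lookup (Dd x) j - lookup (D' x) j) = Dd x"
          by (simp add: pm_eq_iff D'_def lookup_add)
        then have "single (D' x) 1 * (rr x * m) = single (Dd x) (a x ^ q) * m"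
          by (simp add: rr_def mult.assoc[symmetric] mult_single)
        then show "ps x (rr x * m) = Tq e (single (Dd x) (a x ^ q) * m)" by (simp add: ps_def)
      qed
      finally have eq: "sum_list (map (\<lambda>(\<psi>, r). \<psi> (r * m)) cs) = (\<Sum>x\<in>P. Tq e (single (Dd x) (a x ^ q) * m))" .
      show "\<phi> m - sum_list (map (\<lambda>(\<psi>, r). \<psi> (r * m)) cs) \<in> I"
        unfolding eq using decomp[OF pr sj sq, of \<phi> e m] phi IG
        by (simp add: P_def Dd_def a_def q_def)
    qed
    ultimately show "\<exists>cs. (\<forall>(\<psi>, r) \<in> set cs. (e, \<psi>) \<in> \<Psi>) \<and>
        (\<forall>m. \<phi> m - sum_list (map (\<lambda>(\<psi>, r). \<psi> (r * m)) cs) \<in> I)" by blast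
  qed
  qed
  have bound: "gauge I [1] (\<psi> r) \<le> gauge I [1] r / ereal (real (p ^ e)) + ereal (1 / (real p - 1))"
    if "(e, \<psi>) \<in> \<Psi>" for e \<psi> r
  proof -
    have "e \<ge> 1 \<and> (\<exists>D'. (\<forall>j. lookup D' j \<le> CHAR('k) ^ e) \<and>
      \<psi> = (\<lambda>m. Tq e (single D' (1::'k) * m))) \<and> \<psi> \<in> cartier_maps CHAR('k) I e"
      using that unfolding \<Psi>_def by simp
    then obtain D' where e: "e \<ge> 1" and D': "\<forall>j. lookup D' j \<le> CHAR('k) ^ e"
      and \<psi>: "\<psi> = (\<lambda>m. Tq e (single D' (1::'k) * m))" and cm: "\<psi> \<in> cartier_maps CHAR('k) I e"
      by blast
    define q where "q = p ^ e"
    have qp: "q \<ge> p" unfolding q_def using e p2 by (simp add: self_le_power)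
    show ?thesis
    proof (cases "r \<in> I \<or> \<psi> r \<in> I")
      case True
      then have "\<psi> r \<in> I" using cm unfolding cartier_maps_def by blast
      then show ?thesis by (simp add: gauge_def)
    next
      case False
      define d where "d = (LEAST d. in_M I [1] d r)"
      obtain d0 where d0: "r \<in> S_d d0" using in_S_d[of r] by blast
      have "r - r \<in> I" by (simp add: IG I_zero)
      then have ex: "\<exists>d. in_M I [1] d r" using d0 unfolding in_M1 by blast
      have "in_M I [1] d r" unfolding d_def using LeastI_ex[OF ex] .
      then obtain s where s: "s \<in> S_d d" "r - s \<in> I" by (auto simp: in_M1)
      have "\<psi> r - \<psi> s = Tq e (single D' 1 * (r - s))"
        by (simp add: \<psi> Tq_diff[OF pr sj] right_diff_distrib)
      also have "\<dots> \<in> I" using cm s(2) \<psi> unfolding cartier_maps_def by auto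
      finally have "\<psi> r - \<psi> s \<in> I" .
      moreover have "\<psi> s \<in> S_d ((d + 1) div q)"
        using gen_small[OF pr sj sq D' s(1)] by (simp add: \<psi> q_def p_def)
      ultimately have "in_M I [1] ((d + 1) div q) (\<psi> r)" by (auto simp: in_M1)
      then have le: "(LEAST d. in_M I [1] d (\<psi> r)) \<le> (d + 1) div q" by (rule Least_le)
      have q0: "q > 0" using qp p2 by simp
      have "real (LEAST d. in_M I [1] d (\<psi> r)) \<le> real ((d + 1) div q)" using le by simp
      also have "\<dots> \<le> real (d + 1) / real q" by (rule div_real_le[OF q0])
      also have "\<dots> = real d / real q + 1 / real q" by (simp add: add_divide_distrib)
      also have "\<dots> \<le> real d / real q + 1 / (real p - 1)"
      proof -
        have "real p - 1 \<le> real q" using qp by simp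
        moreover have "real p - 1 > 0" using p2 by simp
        ultimately have "1 / real q \<le> 1 / (real p - 1)" by (intro frac_le) auto
        then show ?thesis by simp
      qed
      finally show ?thesis using False q0
        by (simp add: gauge_def d_def q_def)
    qed
  qed
  show ?thesis unfolding gauge_bounded_def
    by (intro exI[of _ "[1]"] conjI genR exI[of _ \<Psi>] exI[of _ "1::real"] genC)
       (use bound in \<open>auto simp: p_def\<close>)
qed

end
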